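(* Let $M$ be a $\lambda$-term in head-normal form and $\vec x$ a list of $n$ distinct variables with $FV(M)\subseteq\vec x$. Then $\llbracket M\rrbracket_{\vec x}$ is not the zero distributor, i.e. there exist $\Delta\in(SD)^n$ and $a\in D$ with $\llbracket M\rrbracket_{\vec x}(\Delta,a)\neq\emptyset$.
   Context: A $\lambda$-term is in head-normal form if it has the shape $\lambda y_1\dots\lambda y_m.\,y\,Q_1\cdots Q_p$ ($m,p\ge0$, $y$ a variable). $[n]=\{1,\dots,n\}$. Fix a class $\mathcal C$ of functions between finite ordinals equal to one of: all bijections, all injections, all surjections, all functions. For a small category $X$, $SX$ has finite lists of objects of $X$ as objects and morphisms $\langle x_1,\dots,x_n\rangle\to\langle y_1,\dots,y_m\rangle$ the tuples $\langle\alpha,f_1,\dots,f_m\rangle$ with $\alpha:[m]\to[n]$ in $\mathcal C$, $f_i:x_{\alpha(i)}\to y_i$; composite of $\langle\alpha,\vec f\rangle$ then $\langle\beta,\vec g\rangle$ is $\langle\alpha\circ\beta,(g_i\circ f_{\beta(i)})_i\rangle$; tensor $\oplus$ = concatenation, unit $\langle\rangle$. Fix a small category $A$. $D=D_A$ is the colimit of $D_0=A$, $D_{k+1}=(SD_k)^{o}\times D_k\sqcup A$ along canonical inclusions: objects $a::=o\mid\vec a\Rightarrow a$ ($o\in\mathrm{Ob}(A)$); morphisms are those of $A$ and $\langle\alpha,\vec f\rangle\Rightarrow f:(\vec a\Rightarrow a)\to(\vec a'\Rightarrow a')$ for $\langle\alpha,\vec f\rangle:\vec a'\to\vec a$ in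 $SD$, $f:a\to a'$. $SD=S(D_A)$. Contexts are objects of $(SD)^n$; $\otimes$ is componentwise concatenation; $\Delta\oplus\langle\vec a\rangle$ appends a component. Denotation $\llbracket M\rrbracket_{\vec x}:((SD)^n)^{o}\times D\to\mathrm{Set}$ for $\vec x=\langle x_1..x_n\rangle\supseteq FV(M)$: $\llbracket x_i\rrbracket_{\vec x}(\Delta,a)=(SD)^n(\Delta,\langle\langle\rangle,\dots,\langle a\rangle,\dots,\langle\rangle\rangle)$ ($\langle a\rangle$ at position $i$); $\llbracket\lambda y.P\rrbracket_{\vec x}(\Delta,a)=\llbracket P\rrbracket_{\vec x\oplus\langle y\rangle}(\Delta\oplus\langle\vec a'\rangle,a')$ if $a=\vec a'\Rightarrow a'$, $\emptyset$ if $a$ atomic; $\llbracket PQ\rrbracket_{\vec x}(\Delta,a)=\int^{\vec a=\langle a_1..a_k\rangle\in SD}\int^{\Gamma_0..\Gamma_k\in(SD)^n}\llbracket P\rrbracket_{\vec x}(\Gamma_0,\vec a\Rightarrow a)\times\prod_{i=1}^k\llbracket Q\rrbracket_{\vec x}(\Gamma_i,a_i)\times(SD)^n(\Delta,\bigotimes_{i=0}^k\Gamma_i)$. *)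

theory Defs
  imports Main
begin

text \<open>A small category A: a set of objects, hom-sets, identities and composition
  (cmp g f is g after f).\<close>

record ('o,'m) cat =
  Ob  :: "'o set"
  Hom :: "'o \<Rightarrow> 'o \<Rightarrow> 'm set"
  idm :: "'o \<Rightarrow> 'm"
  cmp :: "'m \<Rightarrow> 'm \<Rightarrow> 'm"

definition is_category :: "('o,'m) cat \<Rightarrow> bool" where
  "is_category A \<longleftrightarrow>
     (\<forall>a\<in>Ob A. idm A a \<in> Hom A a a) \<and>
     (\<forall>a b f. f \<in> Hom A a b \<longrightarrow> a \<in> Ob A \<and> b \<in> Ob A) \<and>
     (\<forall>a b c f g. f \<in> Hom A a b \<longrightarrow> g \<in> Hom A b c \<longrightarrow> cmp A g f \<in> Hom A a c) \<and>
     (\<forall>a b f. f \<in> Hom A a b \<longrightarrow> cmp A f (idm A a) = f \<and> cmp A (idm A b) f = f) \<and>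
     (\<forall>a b c d f g h. f \<in> Hom A a b \<longrightarrow> g \<in> Hom A b c \<longrightarrow> h \<in> Hom A c d \<longrightarrow>
        cmp A h (cmp A g f) = cmp A (cmp A h g) f)"

text \<open>A function [m] -> [n] is represented 0-indexed as a list alpha of length m
  with entries < n (alpha ! i is the image of i+1, shifted by one).\<close>

datatype fclass = Bijections | Injections | Surjections | AllFunctions

definition inC :: "fclass \<Rightarrow> nat list \<Rightarrow> nat \<Rightarrow> nat \<Rightarrow> bool" where
  "inC C \<alpha> m n \<longleftrightarrow> length \<alpha> = m \<and> (\<forall>i<m. \<alpha> ! i < n) \<and>
     (case C of
        Bijections \<Rightarrow> bij_betw ((!) \<alpha>) {..<m} {..<n}
      | Injections \<Rightarrow> inj_on ((!) \<alpha>) {..<m}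
      | Surjections \<Rightarrow> (!) \<alpha> ` {..<m} = {..<n}
      | AllFunctions \<Rightarrow> True)"

datatype 'o ty = Atom 'o | Arr "'o ty list" "'o ty"

text \<open>Morphisms of D: DA f (f in A) and DArr alpha fs f standing for
  <alpha, fs> => f.\<close>
datatype 'm dm = DA 'm | DArr "nat list" "'m dm list" "'m dm"

type_synonym 'm smor = "nat list \<times> 'm dm list"   \<comment> \<open>morphisms of SD\<close>
type_synonym 'o ctx = "'o ty list list"            \<comment> \<open>objects of (SD)^n\<close>
type_synonym 'm cmor = "'m smor list"              \<comment> \<open>morphisms of (SD)^n\<close>

inductive objD :: "('o,'m) cat \<Rightarrow> 'o ty \<Rightarrow> bool" for A where
  "c \<in> Ob A \<Longrightarrow> objD A (Atom c)"
| "(\<forall>b\<in>set bs. objD A b) \<Longrightarrow> objD A a \<Longrightarrow> objD A (Arr bs a)"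

text \<open>homD C A a a' f : f is a morphism a -> a' in D.  For arrows,
  <alpha,fs> : bs' -> bs in SD, i.e. alpha : [length bs] -> [length bs'] in C and
  fs ! i : bs' ! (alpha ! i) -> bs ! i.\<close>
inductive homD :: "fclass \<Rightarrow> ('o,'m) cat \<Rightarrow> 'o ty \<Rightarrow> 'o ty \<Rightarrow> 'm dm \<Rightarrow> bool" for C A where
  "f \<in> Hom A c c' \<Longrightarrow> c \<in> Ob A \<Longrightarrow> c' \<in> Ob A \<Longrightarrow> homD C A (Atom c) (Atom c') (DA f)"
| "(\<forall>b\<in>set bs. objD A b) \<Longrightarrow> (\<forall>b\<in>set bs'. objD A b) \<Longrightarrow>
   inC C \<alpha> (length bs) (length bs') \<Longrightarrow> length fs = length bs \<Longrightarrow>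
   (\<forall>i<length bs. homD C A (bs' ! (\<alpha> ! i)) (bs ! i) (fs ! i)) \<Longrightarrow>
   homD C A a a' f \<Longrightarrow>
   homD C A (Arr bs a) (Arr bs' a') (DArr \<alpha> fs f)"

definition homS :: "fclass \<Rightarrow> ('o,'m) cat \<Rightarrow> 'o ty list \<Rightarrow> 'o ty list \<Rightarrow> 'm smor \<Rightarrow> bool" where
  "homS C A xs ys \<phi> \<longleftrightarrow> (case \<phi> of (\<alpha>, fs) \<Rightarrow>
     (\<forall>x\<in>set xs. objD A x) \<and> (\<forall>y\<in>set ys. objD A y) \<and>
     inC C \<alpha> (length ys) (length xs) \<and> length fs = length ys \<and>
     (\<forall>i<length ys. homD C A (xs ! (\<alpha> ! i)) (ys ! i) (fs ! i)))"

definition objC :: "('o,'m) cat \<Rightarrow> nat \<Rightarrow> 'o ctx \<Rightarrow> bool" where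
  "objC A n \<Delta> \<longleftrightarrow> length \<Delta> = n \<and> (\<forall>\<Gamma>\<in>set \<Delta>. \<forall>b\<in>set \<Gamma>. objD A b)"

definition homC :: "fclass \<Rightarrow> ('o,'m) cat \<Rightarrow> 'o ctx \<Rightarrow> 'o ctx \<Rightarrow> 'm cmor \<Rightarrow> bool" where
  "homC C A \<Delta> \<Delta>' \<delta> \<longleftrightarrow> length \<Delta>' = length \<Delta> \<and> length \<delta> = length \<Delta> \<and>
     (\<forall>l<length \<Delta>. homS C A (\<Delta> ! l) (\<Delta>' ! l) (\<delta> ! l))"

primrec idD :: "('o,'m) cat \<Rightarrow> 'o ty \<Rightarrow> 'm dm" where
  "idD A (Atom c) = DA (idm A c)"
| "idD A (Arr bs a) = DArr [0..<length bs] (map (idD A) bs) (idD A a)"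

definition idS :: "('o,'m) cat \<Rightarrow> 'o ty list \<Rightarrow> 'm smor" where
  "idS A xs = ([0..<length xs], map (idD A) xs)"

definition idC :: "('o,'m) cat \<Rightarrow> 'o ctx \<Rightarrow> 'm cmor" where
  "idC A \<Delta> = map (idS A) \<Delta>"

text \<open>Composition in D, diagrammatic order: seqD A f g is "f then g".\<close>
function seqD :: "('o,'m) cat \<Rightarrow> 'm dm \<Rightarrow> 'm dm \<Rightarrow> 'm dm" where
  "seqD A (DA f) (DA g) = DA (cmp A g f)"
| "seqD A (DArr \<alpha> fs f) (DArr \<beta> gs g) =
     DArr (map (\<lambda>j. \<beta> ! j) \<alpha>)
          (map (\<lambda>(j, h). if j < length gs then seqD A (gs ! j) h else undefined) (zip \<alpha> fs))
          (seqD A f g)"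
| "seqD A (DA f) (DArr \<beta> gs g) = undefined"
| "seqD A (DArr \<alpha> fs f) (DA g) = undefined"
  by pat_completeness auto
termination
proof (relation "measure (\<lambda>(A, f, g). size f + size g)", goal_cases)
  case 1 then show ?case by simp
next
  case (2 A \<alpha> fs f \<beta> gs g x j h)
  then have "h \<in> set fs" by (auto dest: set_zip_rightD)
  then have "size h \<le> size_list size fs" by (simp add: size_list_estimation')
  moreover have "size (gs ! j) \<le> size_list size gs"
    using 2 by (meson nth_mem order_refl size_list_estimation')
  ultimately show ?case by simp
next
  case 3 then show ?case by simp
qed

definition seqS :: "('o,'m) cat \<Rightarrow> 'm smor \<Rightarrow> 'm smor \<Rightarrow> 'm smor" where
  "seqS A \<phi> \<psi> = (case \<phi> of (\<alpha>, fs) \<Rightarrow> case \<psi> of (\<beta>, gs) \<Rightarrow>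
     (map (\<lambda>j. \<alpha> ! j) \<beta>, map (\<lambda>(j, g). seqD A (fs ! j) g) (zip \<beta> gs)))"

definition seqC :: "('o,'m) cat \<Rightarrow> 'm cmor \<Rightarrow> 'm cmor \<Rightarrow> 'm cmor" where
  "seqC A \<delta> \<delta>' = map2 (seqS A) \<delta> \<delta>'"

text \<open>Tensor (concatenation) of SD-morphisms; each is given together with the
  length of its source.\<close>
fun tensS :: "(nat \<times> 'm smor) list \<Rightarrow> 'm smor" where
  "tensS [] = ([], [])"
| "tensS ((m, (\<alpha>, fs)) # rest) =
     (case tensS rest of (\<beta>, gs) \<Rightarrow> (\<alpha> @ map (\<lambda>j. j + m) \<beta>, fs @ gs))"

definition tensCtx :: "nat \<Rightarrow> 'o ctx list \<Rightarrow> 'o ctx" where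
  "tensCtx n \<Gamma>s = map (\<lambda>l. concat (map (\<lambda>\<Gamma>. \<Gamma> ! l) \<Gamma>s)) [0..<n]"

definition tensM :: "nat \<Rightarrow> 'o ctx list \<Rightarrow> 'm cmor list \<Rightarrow> 'm cmor" where
  "tensM n \<Gamma>s \<gamma>s = map (\<lambda>l. tensS (map2 (\<lambda>\<Gamma> \<gamma>. (length (\<Gamma> ! l), \<gamma> ! l)) \<Gamma>s \<gamma>s)) [0..<n]"

text \<open>The structural morphism concat_j Ls_j -> concat_i Ls_(alpha i) of SD
  induced by alpha (identities on the objects).\<close>
definition sigmaS :: "('o,'m) cat \<Rightarrow> 'o ty list list \<Rightarrow> nat list \<Rightarrow> 'm smor" where
  "sigmaS A Ls \<alpha> =
     (concat (map (\<lambda>j. map (\<lambda>t. sum_list (map length (take j Ls)) + t) [0..<length (Ls ! j)]) \<alpha>),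
      concat (map (\<lambda>j. map (idD A) (Ls ! j)) \<alpha>))"

definition sigmaC :: "('o,'m) cat \<Rightarrow> nat \<Rightarrow> 'o ctx list \<Rightarrow> nat list \<Rightarrow> 'm cmor" where
  "sigmaC A n \<Gamma>s \<alpha> = map (\<lambda>l. sigmaS A (map (\<lambda>\<Gamma>. \<Gamma> ! l) \<Gamma>s) \<alpha>) [0..<n]"

definition unitCtx :: "nat \<Rightarrow> nat \<Rightarrow> 'o ty \<Rightarrow> 'o ctx" where
  "unitCtx n i a = map (\<lambda>l. if l = i then [a] else []) [0..<n]"

definition unitMor :: "nat \<Rightarrow> nat \<Rightarrow> 'm dm \<Rightarrow> 'm cmor" where
  "unitMor n i f = map (\<lambda>l. if l = i then ([0], [f]) else ([], [])) [0..<n]"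

datatype 'v lterm = Var 'v | Lam 'v "'v lterm" | App "'v lterm" "'v lterm"

primrec FV :: "'v lterm \<Rightarrow> 'v set" where
  "FV (Var x) = {x}"
| "FV (Lam y P) = FV P - {y}"
| "FV (App P Q) = FV P \<union> FV Q"

primrec head_var_app :: "'v lterm \<Rightarrow> bool" where
  "head_var_app (Var y) = True"
| "head_var_app (Lam y P) = False"
| "head_var_app (App P Q) = head_var_app P"

primrec hnf :: "'v lterm \<Rightarrow> bool" where
  "hnf (Var y) = True"
| "hnf (Lam y P) = hnf P"
| "hnf (App P Q) = head_var_app (App P Q)"

text \<open>Position of a variable in the variable list (last occurrence, so that
  inner binders shadow outer ones; for distinct lists this is the unique index).\<close>
definition vpos :: "'v list \<Rightarrow> 'v \<Rightarrow> nat" where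
  "vpos xs y = Max {i. i < length xs \<and> xs ! i = y}"

text \<open>Set-valued functors are represented by setoids: a carrier of raw elements, an
  equivalence relation on it, and an action of morphisms on raw elements.  The actual
  set [[M]](Delta,a) is the quotient carrier // relation.  Coends of Set-valued
  functors are quotients of disjoint unions by the equivalence relation generated by
  the functorial actions.\<close>

datatype ('o,'m) val =
    VMor "'m cmor"
  | VApp "'o ty list" "'o ctx" "'o ctx list" "('o,'m) val" "('o,'m) val list" "'m cmor"

record ('o,'m) denot =
  car :: "'o ctx \<Rightarrow> 'o ty \<Rightarrow> ('o,'m) val set"
  rel :: "'o ctx \<Rightarrow> 'o ty \<Rightarrow> (('o,'m) val \<times> ('o,'m) val) set"
  act :: "'m cmor \<Rightarrow> 'm dm \<Rightarrow> ('o,'m) val \<Rightarrow> ('o,'m) val"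

definition app_car ::
  "fclass \<Rightarrow> ('o,'m) cat \<Rightarrow> nat \<Rightarrow> ('o,'m) denot \<Rightarrow> ('o,'m) denot \<Rightarrow> 'o ctx \<Rightarrow> 'o ty \<Rightarrow> ('o,'m) val set" where
  "app_car C A n RP RQ \<Delta> a =
     {VApp bs \<Gamma>0 \<Gamma>s p qs \<delta> | bs \<Gamma>0 \<Gamma>s p qs \<delta>.
        (\<forall>b\<in>set bs. objD A b) \<and> objC A n \<Gamma>0 \<and> length \<Gamma>s = length bs \<and>
        (\<forall>\<Gamma>\<in>set \<Gamma>s. objC A n \<Gamma>) \<and>
        p \<in> car RP \<Gamma>0 (Arr bs a) \<and>
        length qs = length bs \<and> (\<forall>i<length bs. qs ! i \<in> car RQ (\<Gamma>s ! i) (bs ! i)) \<and>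
        homC C A \<Delta> (tensCtx n (\<Gamma>0 # \<Gamma>s)) \<delta>}"

text \<open>Generators of the coend relation: (1) componentwise equivalence,
  (2) the coend over Gamma_0..Gamma_k, (3) the coend over the list a in SD
  (with the Gamma_1..Gamma_k reindexed along the SD-morphism).\<close>
definition app_gen ::
  "fclass \<Rightarrow> ('o,'m) cat \<Rightarrow> nat \<Rightarrow> ('o,'m) denot \<Rightarrow> ('o,'m) denot \<Rightarrow> 'o ctx \<Rightarrow> 'o ty \<Rightarrow>
   (('o,'m) val \<times> ('o,'m) val) set" where
  "app_gen C A n RP RQ \<Delta> a = {(x, y). x \<in> app_car C A n RP RQ \<Delta> a \<and> y \<in> app_car C A n RP RQ \<Delta> a \<and>
     ((\<exists>bs \<Gamma>0 \<Gamma>s p qs p' qs' \<delta>.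
         x = VApp bs \<Gamma>0 \<Gamma>s p qs \<delta> \<and> y = VApp bs \<Gamma>0 \<Gamma>s p' qs' \<delta> \<and>
         (p, p') \<in> rel RP \<Gamma>0 (Arr bs a) \<and> length qs' = length qs \<and>
         (\<forall>i<length qs. (qs ! i, qs' ! i) \<in> rel RQ (\<Gamma>s ! i) (bs ! i)))
    \<or> (\<exists>bs \<Gamma>0 \<Gamma>s \<Gamma>0' \<Gamma>s' \<gamma>0 \<gamma>s p' qs' \<delta>.
         length \<Gamma>s' = length \<Gamma>s \<and> length \<gamma>s = length \<Gamma>s \<and>
         homC C A \<Gamma>0 \<Gamma>0' \<gamma>0 \<and> (\<forall>i<length \<Gamma>s. homC C A (\<Gamma>s ! i) (\<Gamma>s' ! i) (\<gamma>s ! i)) \<and>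
         x = VApp bs \<Gamma>0 \<Gamma>s (act RP \<gamma>0 (idD A (Arr bs a)) p')
                (map (\<lambda>i. act RQ (\<gamma>s ! i) (idD A (bs ! i)) (qs' ! i)) [0..<length bs]) \<delta> \<and>
         y = VApp bs \<Gamma>0' \<Gamma>s' p' qs' (seqC A \<delta> (tensM n (\<Gamma>0 # \<Gamma>s) (\<gamma>0 # \<gamma>s))))
    \<or> (\<exists>bs cs \<alpha> fs \<Gamma>0 \<Gamma>s' p qs' \<delta>.
         homS C A cs bs (\<alpha>, fs) \<and> length \<Gamma>s' = length cs \<and>
         x = VApp cs \<Gamma>0 \<Gamma>s' (act RP (idC A \<Gamma>0) (DArr \<alpha> fs (idD A a)) p) qs' \<delta> \<and>
         y = VApp bs \<Gamma>0 (map (\<lambda>j. \<Gamma>s' ! j) \<alpha>) p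
                (map (\<lambda>i. act RQ (idC A (\<Gamma>s' ! (\<alpha> ! i))) (fs ! i) (qs' ! (\<alpha> ! i))) [0..<length bs])
                (seqC A \<delta> (tensM n [\<Gamma>0, tensCtx n \<Gamma>s'] [idC A \<Gamma>0, sigmaC A n \<Gamma>s' \<alpha>]))))}"

primrec den :: "fclass \<Rightarrow> ('o,'m) cat \<Rightarrow> 'v lterm \<Rightarrow> 'v list \<Rightarrow> ('o,'m) denot" where
  "den C A (Var y) xs =
     \<lparr> car = (\<lambda>\<Delta> a. {VMor \<delta> | \<delta>. y \<in> set xs \<and>
                        homC C A \<Delta> (unitCtx (length xs) (vpos xs y) a) \<delta>}),
       rel = (\<lambda>\<Delta> a. Id_on {VMor \<delta> | \<delta>. y \<in> set xs \<and>
                        homC C A \<Delta> (unitCtx (length xs) (vpos xs y) a) \<delta>}),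
       act = (\<lambda>\<delta>' f v. case v of
                 VMor \<delta> \<Rightarrow> VMor (seqC A \<delta>' (seqC A \<delta> (unitMor (length xs) (vpos xs y) f)))
               | _ \<Rightarrow> v) \<rparr>"
| "den C A (Lam y P) xs =
     (let R = den C A P (xs @ [y]) in
     \<lparr> car = (\<lambda>\<Delta> a. case a of Atom _ \<Rightarrow> {} | Arr bs b \<Rightarrow> car R (\<Delta> @ [bs]) b),
       rel = (\<lambda>\<Delta> a. case a of Atom _ \<Rightarrow> {} | Arr bs b \<Rightarrow> rel R (\<Delta> @ [bs]) b),
       act = (\<lambda>\<delta>' f v. case f of DArr \<alpha> fs g \<Rightarrow> act R (\<delta>' @ [(\<alpha>, fs)]) g v | DA _ \<Rightarrow> v) \<rparr>)"
| "den C A (App P Q) xs =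
     (let RP = den C A P xs; RQ = den C A Q xs; n = length xs in
     \<lparr> car = app_car C A n RP RQ,
       rel = (\<lambda>\<Delta> a. Id_on (app_car C A n RP RQ \<Delta> a) \<union>
                     (app_gen C A n RP RQ \<Delta> a \<union> (app_gen C A n RP RQ \<Delta> a)\<inverse>)\<^sup>+),
       act = (\<lambda>\<delta>' f v. case v of
                 VApp bs \<Gamma>0 \<Gamma>s p qs \<delta> \<Rightarrow>
                   VApp bs \<Gamma>0 \<Gamma>s (act RP (idC A \<Gamma>0) (DArr [0..<length bs] (map (idD A) bs) f) p)
                        qs (seqC A \<delta>' \<delta>)
               | _ \<Rightarrow> v) \<rparr>)"

definition sem :: "fclass \<Rightarrow> ('o,'m) cat \<Rightarrow> 'v lterm \<Rightarrow> 'v list \<Rightarrow> 'o ctx \<Rightarrow> 'o ty \<Rightarrow> ('o,'m) val set set" where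
  "sem C A M xs \<Delta> a = car (den C A M xs) \<Delta> a // rel (den C A M xs) \<Delta> a"

end

theory Submission
  imports Defs
begin

fun headv :: "'v lterm \<Rightarrow> 'v" where
  "headv (Var y) = y"
| "headv (App P Q) = headv P"
| "headv (Lam y P) = y"

fun nargs :: "'v lterm \<Rightarrow> nat" where
  "nargs (Var y) = 0"
| "nargs (App P Q) = Suc (nargs P)"
| "nargs (Lam y P) = 0"

fun arrs :: "nat \<Rightarrow> 'o ty \<Rightarrow> 'o ty" where
  "arrs 0 a = a"
| "arrs (Suc k) a = arrs k (Arr [] a)"

lemma objD_arrs: "objD A a \<Longrightarrow> objD A (arrs k a)"
  proof (induction k arbitrary: a)
  case (Suc k)
  have "objD A (Arr [] a)" using Suc(2) by (intro objD.intros) auto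
  then show ?case using Suc(1) by simp
qed simp

lemma headv_FV: "head_var_app N \<Longrightarrow> headv N \<in> FV N"
  by (induction N) auto

lemma inC_id: "inC C [0..<m] m m"
  unfolding inC_def by (cases C) (auto simp: bij_betw_def inj_on_def image_def)

lemma homD_id:
  assumes cat: "is_category A"
  shows "objD A a \<Longrightarrow> homD C A a a (idD A a)"
proof (induction rule: objD.induct)
  case (1 c)
  then show ?case using cat unfolding is_category_def by (auto intro: homD.intros)
next
  case (2 bs a)
  have a: "\<forall>b\<in>set bs. objD A b" using 2(1) by blast
  have b: "\<forall>i<length bs. homD C A (bs ! ([0..<length bs] ! i)) (bs ! i) (map (idD A) bs ! i)"
    using 2(1) by (simp add: nth_mem)
  show ?case
    apply simp
    apply (rule homD.intros)
         apply (rule a)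
        apply (rule a)
       apply (rule inC_id)
      apply simp
     apply (rule b)
    using 2 by blast
qed
lemma homC_id:
  assumes cat: "is_category A" and "\<forall>\<Gamma>\<in>set \<Delta>. \<forall>b\<in>set \<Gamma>. objD A b"
  shows "homC C A \<Delta> \<Delta> (idC A \<Delta>)"
  unfolding homC_def idC_def idS_def homS_def
proof (intro conjI allI impI, simp_all)
  fix l assume l: "l < length \<Delta>"
  have o: "\<forall>b\<in>set (\<Delta> ! l). objD A b" using assms(2) l nth_mem by blast
  show "(\<forall>x\<in>set (\<Delta> ! l). objD A x) \<and>
        inC C [0..<length (\<Delta> ! l)] (length (\<Delta> ! l)) (length (\<Delta> ! l)) \<and>
        (\<forall>i<length (\<Delta> ! l). homD C A (\<Delta> ! l ! i) (\<Delta> ! l ! i) (idD A (\<Delta> ! l ! i)))"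
    using o inC_id homD_id[OF cat] by (simp add: nth_mem)
qed

lemma objC_unit:
  "objD A a \<Longrightarrow> objC A n (unitCtx n i a)"
  unfolding objC_def unitCtx_def by auto

lemma tensCtx_single: "length \<Delta> = n \<Longrightarrow> tensCtx n [\<Delta>] = \<Delta>"
  using map_nth[of \<Delta>] unfolding tensCtx_def by simp

lemma car_App: "car (den C A (App P Q) xs) = app_car C A (length xs) (den C A P xs) (den C A Q xs)"
  by (simp only: den.simps Let_def denot.select_convs)

lemma head_lemma:
  assumes cat: "is_category A"
  shows "head_var_app N \<Longrightarrow> headv N \<in> set xs \<Longrightarrow> objD A a0 \<Longrightarrow>
     car (den C A N xs) (unitCtx (length xs) (vpos xs (headv N)) (arrs (nargs N) a0)) a0 \<noteq> {}"
proof (induction N arbitrary: a0)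
  case (Var y)
  have "homC C A (unitCtx (length xs) (vpos xs y) a0) (unitCtx (length xs) (vpos xs y) a0)
      (idC A (unitCtx (length xs) (vpos xs y) a0))"
    using homC_id[OF cat] objC_unit[OF Var(3)] unfolding objC_def by blast
  then show ?case using Var by auto
next
  case (Lam y P)
  then show ?case by simp
next
  case (App P Q)
  let ?D = "unitCtx (length xs) (vpos xs (headv P)) (arrs (nargs P) (Arr [] a0))"
  have oa: "objD A (Arr [] a0)" using App(5) by (auto intro: objD.intros)
  from App(1)[OF _ _ oa] App(3,4) obtain p where p: "p \<in> car (den C A P xs) ?D (Arr [] a0)"
    by auto
  have oD: "objC A (length xs) ?D" by (rule objC_unit[OF objD_arrs[OF oa]])
  have h: "homC C A ?D (tensCtx (length xs) [?D]) (idC A ?D)"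
    using homC_id[OF cat] oD tensCtx_single[of ?D] unfolding objC_def by auto
  have "VApp [] ?D [] p [] (idC A ?D) \<in> app_car C A (length xs) (den C A P xs) (den C A Q xs) ?D a0"
    unfolding app_car_def
    apply (rule CollectI)
    apply (rule exI)+
    apply (rule conjI[OF refl])
    using oD p h by simp
  then show ?case unfolding car_App
    by (simp only: headv.simps nargs.simps arrs.simps) blast
qed

lemma hnf_lemma:
  assumes cat: "is_category A" and ob: "Ob A \<noteq> {}"
  shows "hnf M \<Longrightarrow> FV M \<subseteq> set xs \<Longrightarrow>
     \<exists>\<Delta> a. objC A (length xs) \<Delta> \<and> objD A a \<and> car (den C A M xs) \<Delta> a \<noteq> {}"
proof (induction M arbitrary: xs)
  case (Lam y P)
  from Lam obtain \<Delta>' a where d: "objC A (length (xs @ [y])) \<Delta>'" "objD A a"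
    "car (den C A P (xs @ [y])) \<Delta>' a \<noteq> {}" proof -
    have "hnf P" using Lam(2) by simp
    moreover have "FV P \<subseteq> set (xs @ [y])" using Lam(3) by auto
    ultimately show ?thesis using Lam(1) that by blast
  qed
  have ne: "\<Delta>' \<noteq> []" using d(1) unfolding objC_def by auto
  have eq: "\<Delta>' = butlast \<Delta>' @ [last \<Delta>']" using ne by simp
  have o1: "objC A (length xs) (butlast \<Delta>')" using d(1) unfolding objC_def
    by (auto dest: in_set_butlastD)
  have o2: "objD A (Arr (last \<Delta>') a)" using d(1,2) ne unfolding objC_def
    by (auto intro!: objD.intros)
  have "car (den C A (Lam y P) xs) (butlast \<Delta>') (Arr (last \<Delta>') a) \<noteq> {}"
    using d(3) eq by (simp add: Let_def)
  then show ?case using o1 o2 by blast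
next
  case (Var y)
  obtain c where c: "c \<in> Ob A" using ob by auto
  have oa: "objD A (Atom c)" using c by (rule objD.intros)
  have "headv (Var y) \<in> set xs" using Var by simp
  with head_lemma[OF cat, of "Var y" xs "Atom c" C] oa
  have "car (den C A (Var y) xs) (unitCtx (length xs) (vpos xs (headv (Var y))) (arrs (nargs (Var y)) (Atom c))) (Atom c) \<noteq> {}"
    by simp
  moreover have "objC A (length xs) (unitCtx (length xs) (vpos xs (headv (Var y))) (arrs (nargs (Var y)) (Atom c)))"
    using objC_unit[OF objD_arrs[OF oa]] by blast
  ultimately show ?case using oa by (intro exI conjI)
next
  case (App P Q)
  obtain c where c: "c \<in> Ob A" using ob by auto
  have oa: "objD A (Atom c)" using c by (rule objD.intros)
  have hv: "head_var_app (App P Q)" using App by simp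
  have "headv (App P Q) \<in> set xs" using headv_FV[OF hv] App by blast
  with head_lemma[OF cat hv _ oa, of xs C]
  have "car (den C A (App P Q) xs) (unitCtx (length xs) (vpos xs (headv (App P Q))) (arrs (nargs (App P Q)) (Atom c))) (Atom c) \<noteq> {}"
    by blast
  moreover have "objC A (length xs) (unitCtx (length xs) (vpos xs (headv (App P Q))) (arrs (nargs (App P Q)) (Atom c)))"
    using objC_unit[OF objD_arrs[OF oa]] by blast
  ultimately show ?case using oa by (intro exI conjI)
qed

theorem lemma3:
  fixes C :: fclass and A :: "('o,'m) cat" and M :: "'v lterm" and xs :: "'v list"
  assumes "is_category A"
    and "Ob A \<noteq> {}"
    and "hnf M"
    and "distinct xs"
    and "FV M \<subseteq> set xs"
  shows "\<exists>\<Delta> a. objC A (length xs) \<Delta> \<and> objD A a \<and> sem C A M xs \<Delta> a \<noteq> {}"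
proof -
  obtain \<Delta> a where d: "objC A (length xs) \<Delta>" "objD A a" "car (den C A M xs) \<Delta> a \<noteq> {}"
    using hnf_lemma[OF assms(1,2,3,5)] by blast
  have "sem C A M xs \<Delta> a \<noteq> {}" using d(3) unfolding sem_def quotient_def by auto
  then show ?thesis using d by blast
qed

end
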